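(* Let $u:A^{\mathrm{ground}}\to[0,1]$ with $u(a_\bot)=1$ and $w:A^{\mathrm{ground}}\to\mathbb{R}$. Let $S^{\mathrm{best}}$ be the item list returned by the procedure BestPerm (described in the context) on input $(u,w)$. Then $f(S^{\mathrm{best}},u,w)=\max_{A\in\mathcal{A}}f(A,u,w)$.
   Context: $A^{\mathrm{ground}}=\{a_1,\dots,a_N,a_\bot\}$ with regular items $a_1,\dots,a_N$ and a virtual item $a_\bot$; $1\le m\le N$. $\mathcal{A}$ is the set of sequences consisting of between $1$ and $m$ distinct regular items followed by $a_\bot$. For a sequence $A$ of distinct items, $f(A,u,w)=\sum_{i=1}^{|A|}\prod_{j=1}^{i-1}(1-u(A(j)))u(A(i))w(A(i))$. Procedure BestPerm$(u,w)$: let $J$ be the number of regular items $a$ with $w(a)>w(a_\bot)$ and relabel these items $a_1,\dots,a_J$ so that $w(a_1)\ge\dots\ge w(a_J)$. If $J=0$: output $(a',a_\bot)$ where $a'$ maximizes $u(a)w(a)+(1-u(a))w(a_\bot)$ over regular items $a$. If $1\le J\le m$: output $(a_1,\dots,a_J,a_\bot)$. If $J>m$: compute tables $S[i][k]$ (sequences) and $F[i][k]$ (values) by: $S[J][1]=(a_J)$, $F[J][1]=u(a_J)w(a_J)+(1-u(a_J))w(a_\bot)$; for all $i\in[J]$, $S[i][0]=\emptyset$, $F[i][0]=w(a_\bot)$; for all $i\in[J]$ and $J-i+1<k\le m$, $F[i][k]=-\infty$; for $i=J-1,\dots,1$ and $k=1,\dots,\min\{m,J-i+1\}$: if $F[i+1][k]\ge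 u(a_i)w(a_i)+(1-u(a_i))F[i+1][k-1]$ then $S[i][k]=S[i+1][k]$, $F[i][k]=F[i+1][k]$, otherwise $S[i][k]=(a_i,S[i+1][k-1])$ (i.e. $a_i$ prepended), $F[i][k]=u(a_i)w(a_i)+(1-u(a_i))F[i+1][k-1]$. Output $S[1][m]$ followed by $a_\bot$. *)

theory Defs
  imports Main "HOL-Library.Extended_Real"
begin

definition fval :: "'a list \<Rightarrow> ('a \<Rightarrow> real) \<Rightarrow> ('a \<Rightarrow> real) \<Rightarrow> real" where
  "fval A u w = (\<Sum>i<length A. (\<Prod>j<i. 1 - u (A ! j)) * u (A ! i) * w (A ! i))"

definition feasible :: "'a set \<Rightarrow> 'a \<Rightarrow> nat \<Rightarrow> 'a list set" where
  "feasible R abot m = {B @ [abot] | B. distinct B \<and> set B \<subseteq> R \<and> 1 \<le> length B \<and> length B \<le> m}"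

text \<open>For the suffix xs = (a_i, ..., a_J) of the relabelled list
  and k, dp abot u w xs k = (F[i][k], S[i][k]).  Entries with F = -infinity
  (k > J-i+1) carry a dummy sequence [] (never output).\<close>
fun dp :: "'a \<Rightarrow> ('a \<Rightarrow> real) \<Rightarrow> ('a \<Rightarrow> real) \<Rightarrow> 'a list \<Rightarrow> nat \<Rightarrow> ereal \<times> 'a list" where
  "dp abot u w xs 0 = (ereal (w abot), [])"
| "dp abot u w [] (Suc k) = (-\<infinity>, [])"
| "dp abot u w (a # xs) (Suc k) =
     (if length xs + 1 < Suc k then (-\<infinity>, [])
      else if xs = [] then (ereal (u a * w a + (1 - u a) * w abot), [a])
      else
        (let (F1, S1) = dp abot u w xs (Suc k);
             (F0, S0) = dp abot u w xs k;
             cand = ereal (u a * w a) + ereal (1 - u a) * F0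
         in if F1 \<ge> cand then (F1, S1) else (cand, a # S0)))"

text \<open>BestPerm as a relation: S is a possible output of BestPerm(u,w)
  (ties in the sorting and in the argmax may be broken arbitrarily).\<close>
definition best_perm ::
  "'a set \<Rightarrow> 'a \<Rightarrow> nat \<Rightarrow> ('a \<Rightarrow> real) \<Rightarrow> ('a \<Rightarrow> real) \<Rightarrow> 'a list \<Rightarrow> bool" where
  "best_perm R abot m u w S \<longleftrightarrow>
     (let J = card {a \<in> R. w a > w abot} in
      if J = 0 then
        (\<exists>a'. a' \<in> R \<and>
           (\<forall>a\<in>R. u a * w a + (1 - u a) * w abot \<le> u a' * w a' + (1 - u a') * w abot) \<and>
           S = [a', abot])
      else
        (\<exists>L. distinct L \<and> set L = {a \<in> R. w a > w abot} \<and>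
             sorted_wrt (\<lambda>x y. w x \<ge> w y) L \<and>
             S = (if J \<le> m then L else snd (dp abot u w L m)) @ [abot]))"

end

theory Submission
  imports Defs "HOL-Library.Sublist"
begin

fun gv :: "('a \<Rightarrow> real) \<Rightarrow> ('a \<Rightarrow> real) \<Rightarrow> 'a \<Rightarrow> 'a list \<Rightarrow> real" where
  "gv u w abot [] = w abot"
| "gv u w abot (a # B) = u a * w a + (1 - u a) * gv u w abot B"

lemma fval_Nil: "fval [] u w = 0"
  by (simp add: fval_def)

lemma fval_Cons: "fval (a # xs) u w = u a * w a + (1 - u a) * fval xs u w"
proof -
  have "fval (a # xs) u w =
     (\<Sum>i<Suc (length xs). (\<Prod>j<i. 1 - u ((a#xs) ! j)) * u ((a#xs) ! i) * w ((a#xs) ! i))"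
    by (simp add: fval_def)
  also have "\<dots> = u a * w a + (\<Sum>i<length xs. (\<Prod>j<Suc i. 1 - u ((a#xs) ! j)) * u (xs ! i) * w (xs ! i))"
    by (subst sum.lessThan_Suc_shift) simp
  also have "\<dots> = u a * w a + (\<Sum>i<length xs. (1 - u a) * ((\<Prod>j<i. 1 - u (xs ! j)) * u (xs ! i) * w (xs ! i)))"
    by (subst prod.lessThan_Suc_shift) (simp add: mult.assoc)
  also have "\<dots> = u a * w a + (1 - u a) * fval xs u w"
    by (simp add: fval_def sum_distrib_left)
  finally show ?thesis .
qed

lemma fval_gv: "u abot = 1 \<Longrightarrow> fval (B @ [abot]) u w = gv u w abot B"
  by (induction B) (simp_all add: fval_Cons fval_Nil)

lemma subseq_Cons_right:
  "subseq C (x # xs) \<longleftrightarrow> subseq C xs \<or> (\<exists>C'. C = x # C' \<and> subseq C' xs)"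
  by (cases C) (auto dest: subseq_Cons')

lemma sorted_wrt_remove1: "sorted_wrt P xs \<Longrightarrow> sorted_wrt P (remove1 a xs)"
proof (induction xs)
  case (Cons x xs)
  then show ?case using set_remove1_subset[of a xs] by auto
qed simp

lemma subseq_set: "subseq C xs \<Longrightarrow> set C \<subseteq> set xs"
  by (induction rule: list_emb.induct) auto

lemma subseq_distinct: "subseq C xs \<Longrightarrow> distinct xs \<Longrightarrow> distinct C"
proof (induction xs arbitrary: C)
  case Nil then show ?case by (cases C) auto
next
  case (Cons x xs)
  from Cons.prems(1) have "subseq C xs \<or> (\<exists>C'. C = x # C' \<and> subseq C' xs)"
    by (simp add: subseq_Cons_right)
  then show ?case
  proof
    assume "subseq C xs" then show ?thesis using Cons.IH[of C] Cons.prems(2) by simp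
  next
    assume "\<exists>C'. C = x # C' \<and> subseq C' xs"
    then obtain C' where "C = x # C'" "subseq C' xs" by blast
    moreover have "distinct C'" using Cons.IH[of C'] Cons.prems(2) \<open>subseq C' xs\<close> by simp
    moreover have "x \<notin> set C'" using subseq_set[of C' xs] \<open>subseq C' xs\<close> Cons.prems(2) by auto
    ultimately show ?thesis by simp
  qed
qed

context
  fixes R :: "'a set" and abot :: 'a and u w :: "'a \<Rightarrow> real"
  assumes u01: "\<And>a. a \<in> R \<Longrightarrow> 0 \<le> u a \<and> u a \<le> 1"
begin

lemma gv_ge: "set C \<subseteq> R \<Longrightarrow> (\<forall>x\<in>set C. w x > w abot) \<Longrightarrow> w abot \<le> gv u w abot C"
proof (induction C)
  case Nil then show ?case by simp
next
  case (Cons c C)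
  have u: "0 \<le> u c" "u c \<le> 1" using u01 Cons.prems by auto
  have "w abot = u c * w abot + (1 - u c) * w abot" by (simp add: algebra_simps)
  also have "\<dots> \<le> u c * w c + (1 - u c) * gv u w abot C"
    apply (rule add_mono)
    using Cons u by (auto intro!: mult_left_mono)
  finally show ?case by simp
qed

lemma gv_le: "set C \<subseteq> R \<Longrightarrow> (\<forall>x\<in>set C. w x \<le> w abot) \<Longrightarrow> gv u w abot C \<le> w abot"
proof (induction C)
  case Nil then show ?case by simp
next
  case (Cons c C)
  have u: "0 \<le> u c" "u c \<le> 1" using u01 Cons.prems by auto
  have "u c * w c + (1 - u c) * gv u w abot C \<le> u c * w abot + (1 - u c) * w abot"
    apply (rule add_mono)
    using Cons u by (auto intro!: mult_left_mono)
  also have "\<dots> = w abot" by (simp add: algebra_simps)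
  finally show ?case by simp
qed

lemma swap_le:
  assumes "a \<in> R" "x \<in> R" "w a \<le> w x"
  shows "gv u w abot (a # x # C) \<le> gv u w abot (x # a # C)"
proof -
  have "0 \<le> u a * u x" using u01 assms by auto
  then have "u a * u x * (w a - w x) \<le> 0" using assms(3) by (simp add: mult_nonneg_nonpos)
  then show ?thesis by (simp add: algebra_simps)
qed

lemma ins_lemma:
  "a \<in> set L \<Longrightarrow> distinct L \<Longrightarrow> sorted_wrt (\<lambda>x y. w x \<ge> w y) L \<Longrightarrow> set L \<subseteq> R \<Longrightarrow>
   subseq C' (remove1 a L) \<Longrightarrow>
   \<exists>C. subseq C L \<and> length C = Suc (length C') \<and> gv u w abot (a # C') \<le> gv u w abot C"
proof (induction L arbitrary: C')
  case Nil then show ?case by simp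
next
  case (Cons x L)
  show ?case
  proof (cases "x = a")
    case True
    then show ?thesis using Cons.prems by (intro exI[of _ "a # C'"]) auto
  next
    case False
    then have aL: "a \<in> set L" and rem: "remove1 a (x # L) = x # remove1 a L"
      using Cons.prems by auto
    have IH': "\<And>C'. subseq C' (remove1 a L) \<Longrightarrow>
      \<exists>C. subseq C L \<and> length C = Suc (length C') \<and> gv u w abot (a # C') \<le> gv u w abot C"
      using Cons.IH[OF aL] Cons.prems by auto
    from Cons.prems(5) rem have "subseq C' (remove1 a L) \<or> (\<exists>C''. C' = x # C'' \<and> subseq C'' (remove1 a L))"
      by (simp add: subseq_Cons_right)
    then show ?thesis
    proof
      assume "subseq C' (remove1 a L)"
      then obtain C0 where "subseq C0 L" "length C0 = Suc (length C')" "gv u w abot (a # C') \<le> gv u w abot C0"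
        using IH' by blast
      then show ?thesis by (intro exI[of _ C0]) auto
    next
      assume "\<exists>C''. C' = x # C'' \<and> subseq C'' (remove1 a L)"
      then obtain C'' where C': "C' = x # C''" and sub: "subseq C'' (remove1 a L)" by blast
      then obtain C0 where C0: "subseq C0 L" "length C0 = Suc (length C'')" "gv u w abot (a # C'') \<le> gv u w abot C0"
        using IH'[OF sub] by blast
      have xR: "x \<in> R" and aR: "a \<in> R" using Cons.prems aL by auto
      have wa: "w a \<le> w x" using Cons.prems(3) aL by auto
      have ux: "0 \<le> 1 - u x" using u01 xR by auto
      have "gv u w abot (a # C') \<le> gv u w abot (x # a # C'')"
        unfolding C' by (rule swap_le[OF aR xR wa])
      also have "\<dots> = u x * w x + (1 - u x) * gv u w abot (a # C'')" by simp
      also have "\<dots> \<le> u x * w x + (1 - u x) * gv u w abot C0"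
        using C0(3) ux by (simp add: mult_left_mono)
      also have "\<dots> = gv u w abot (x # C0)" by simp
      finally show ?thesis using C0 C' by (intro exI[of _ "x # C0"]) auto
    qed
  qed
qed

lemma main_lemma:
  "distinct L \<Longrightarrow> sorted_wrt (\<lambda>x y. w x \<ge> w y) L \<Longrightarrow> set L \<subseteq> R \<Longrightarrow>
   (\<forall>x\<in>set L. w x > w abot) \<Longrightarrow> distinct B \<Longrightarrow> set B \<subseteq> R \<Longrightarrow>
   {x\<in>set B. w x > w abot} \<subseteq> set L \<Longrightarrow> k \<le> length L \<Longrightarrow>
   length (filter (\<lambda>x. w x > w abot) B) \<le> k \<Longrightarrow>
   \<exists>C. subseq C L \<and> length C = k \<and> gv u w abot B \<le> gv u w abot C"
proof (induction B arbitrary: L k)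
  case Nil
  have "subseq (take k L) L" by (rule prefix_imp_subseq) (simp add: take_is_prefix)
  moreover have "set (take k L) \<subseteq> set L" by (rule set_take_subset)
  ultimately show ?case using Nil gv_ge[of "take k L"]
    by (intro exI[of _ "take k L"]) auto
next
  case (Cons a B)
  have ua: "0 \<le> u a" "u a \<le> 1" using u01 Cons.prems by auto
  show ?case
  proof (cases "w a > w abot")
    case False
    then obtain C where C: "subseq C L" "length C = k" "gv u w abot B \<le> gv u w abot C"
      using Cons.IH[of L k] Cons.prems by auto
    have "w abot \<le> gv u w abot C"
      using gv_ge[of C] subseq_set[OF C(1)] Cons.prems by auto
    then have "w a \<le> gv u w abot C" using False by simp
    then have "u a * w a + (1 - u a) * gv u w abot B \<le> u a * gv u w abot C + (1 - u a) * gv u w abot C"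
      using C(3) ua by (intro add_mono mult_left_mono) auto
    also have "\<dots> = gv u w abot C" by (simp add: algebra_simps)
    finally show ?thesis using C by auto
  next
    case True
    have aL: "a \<in> set L" using True Cons.prems by auto
    have kpos: "1 \<le> k" using True Cons.prems by auto
    have dL': "distinct (remove1 a L)" using Cons.prems by simp
    have sL': "sorted_wrt (\<lambda>x y. w x \<ge> w y) (remove1 a L)"
      using Cons.prems(2) by (simp add: sorted_wrt_remove1)
    have setL': "set (remove1 a L) = set L - {a}" using Cons.prems(1) by simp
    have dB: "distinct B" and sB: "set B \<subseteq> R" using Cons.prems by auto
    have p1: "set (remove1 a L) \<subseteq> R" using setL' Cons.prems by auto
    have p2: "\<forall>x\<in>set (remove1 a L). w x > w abot" using setL' Cons.prems by auto
    have p3: "{x\<in>set B. w x > w abot} \<subseteq> set (remove1 a L)" using setL' Cons.prems by auto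
    have p4: "k - 1 \<le> length (remove1 a L)" using Cons.prems aL by (simp add: length_remove1)
    have p5: "length (filter (\<lambda>x. w x > w abot) B) \<le> k - 1" using Cons.prems True by simp
    obtain C' where C': "subseq C' (remove1 a L)" "length C' = k - 1" "gv u w abot B \<le> gv u w abot C'"
      using Cons.IH[OF dL' sL' p1 p2 dB sB p3 p4 p5] by blast
    obtain C where C: "subseq C L" "length C = Suc (length C')" "gv u w abot (a # C') \<le> gv u w abot C"
      using ins_lemma[OF aL Cons.prems(1-3) C'(1)] by blast
    have "gv u w abot (a # B) \<le> gv u w abot (a # C')"
      using C'(3) ua by (simp add: mult_left_mono)
    then show ?thesis using C C'(2) kpos by (intro exI[of _ C]) auto
  qed
qed

lemma dp_short: "length xs < Suc k \<Longrightarrow> dp abot u w xs (Suc k) = (-\<infinity>, [])"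
  by (cases xs) auto

lemma gv_mono_Cons: "a \<in> R \<Longrightarrow> gv u w abot C \<le> gv u w abot D \<Longrightarrow> gv u w abot (a # C) \<le> gv u w abot (a # D)"
  using u01[of a] by (simp add: mult_left_mono)

lemma dp_correct:
  "set xs \<subseteq> R \<Longrightarrow> k \<le> length xs \<Longrightarrow>
   fst (dp abot u w xs k) = ereal (gv u w abot (snd (dp abot u w xs k))) \<and>
   subseq (snd (dp abot u w xs k)) xs \<and> length (snd (dp abot u w xs k)) = k \<and>
   (\<forall>C. subseq C xs \<and> length C = k \<longrightarrow> gv u w abot C \<le> gv u w abot (snd (dp abot u w xs k)))"
proof (induction xs arbitrary: k)
  case Nil
  then show ?case by simp
next
  case (Cons a xs)
  show ?case
  proof (cases k)
    case 0
    then show ?thesis by simp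
  next
    case (Suc k')
    have aR: "a \<in> R" and xsR: "set xs \<subseteq> R" using Cons.prems by auto
    have kle: "k' \<le> length xs" using Cons.prems Suc by simp
    show ?thesis
    proof (cases "xs = []")
      case True
      then have k0: "k' = 0" using kle by simp
      have C1: "C = [a]" if "subseq C [a]" "length C = Suc 0" for C
        using that by (cases C) (auto simp: subseq_Cons_right)
      have "\<forall>C. subseq C [a] \<and> length C = Suc 0 \<longrightarrow> gv u w abot C \<le> gv u w abot [a]"
        using C1 by blast
      then show ?thesis using True k0 Suc by simp
    next
      case False
      obtain F0 S0 where d0: "dp abot u w xs k' = (F0, S0)" by (cases "dp abot u w xs k'")
      obtain F1 S1 where d1: "dp abot u w xs (Suc k') = (F1, S1)" by (cases "dp abot u w xs (Suc k')")
      have IH0: "F0 = ereal (gv u w abot S0)" "subseq S0 xs" "length S0 = k'"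
        "\<And>C. subseq C xs \<Longrightarrow> length C = k' \<Longrightarrow> gv u w abot C \<le> gv u w abot S0"
        using Cons.IH[OF xsR kle] d0 by auto
      define cand where "cand = ereal (gv u w abot (a # S0))"
      have candeq: "ereal (u a * w a) + ereal (1 - u a) * F0 = cand"
        unfolding cand_def IH0(1) by simp
      have eq: "dp abot u w (a # xs) (Suc k') = (if F1 \<ge> cand then (F1, S1) else (cand, a # S0))"
        using False kle d0 d1 candeq by (simp add: Let_def)
      have optC: "gv u w abot C \<le> gv u w abot (a # S0)"
        if "subseq C' xs" "length C' = k'" "C = a # C'" for C C'
        using that IH0(4)[of C'] gv_mono_Cons[OF aR, of C' S0] by simp
      show ?thesis
      proof (cases "k' = length xs")
        case True
        then have "F1 = -\<infinity>" "S1 = []" using d1 dp_short[of xs k'] by auto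
        then have res: "dp abot u w (a # xs) (Suc k') = (cand, a # S0)" using eq cand_def by simp
        have "gv u w abot C \<le> gv u w abot (a # S0)"
          if "subseq C (a # xs)" "length C = Suc k'" for C
        proof -
          have "length xs < length C" using that(2) True by simp
          then have ns: "\<not> subseq C xs" by (rule not_subseq_length)
          have "subseq C xs \<or> (\<exists>C'. C = a # C' \<and> subseq C' xs)"
            by (rule iffD1[OF subseq_Cons_right that(1)])
          with ns obtain C' where "C = a # C'" "subseq C' xs" by blast
          then show ?thesis using optC[of C' C] that(2) by simp
        qed
        then have allC: "\<forall>C. subseq C (a # xs) \<and> length C = Suc k' \<longrightarrow> gv u w abot C \<le> gv u w abot (a # S0)"
          by blast
        have sub: "subseq (a # S0) (a # xs)" by (rule subseq_Cons2[OF IH0(2)])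
        show ?thesis unfolding Suc res using IH0(3) sub allC cand_def by simp
      next
        case False
        then have kle1: "Suc k' \<le> length xs" using kle by simp
        have IH1: "F1 = ereal (gv u w abot S1)" "subseq S1 xs" "length S1 = Suc k'"
          "\<And>C. subseq C xs \<Longrightarrow> length C = Suc k' \<Longrightarrow> gv u w abot C \<le> gv u w abot S1"
          using Cons.IH[OF xsR kle1] d1 by auto
        have opt: "gv u w abot C \<le> max (gv u w abot S1) (gv u w abot (a # S0))"
          if "subseq C (a # xs)" "length C = Suc k'" for C
        proof -
          have "subseq C xs \<or> (\<exists>C'. C = a # C' \<and> subseq C' xs)"
            by (rule iffD1[OF subseq_Cons_right that(1)])
          then show ?thesis
          proof
            assume "subseq C xs" then show ?thesis using IH1(4)[of C] that(2) by (simp add: le_max_iff_disj)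
          next
            assume "\<exists>C'. C = a # C' \<and> subseq C' xs"
            then obtain C' where "C = a # C'" "subseq C' xs" by blast
            then show ?thesis using optC[of C' C] that(2) by (simp add: le_max_iff_disj)
          qed
        qed
        show ?thesis
        proof (cases "F1 \<ge> cand")
          case True
          then have le: "gv u w abot (a # S0) \<le> gv u w abot S1" using IH1(1) cand_def by simp
          have r: "dp abot u w (a # xs) (Suc k') = (F1, S1)" using True eq by simp
          have sub: "subseq S1 (a # xs)" by (rule iffD2[OF subseq_Cons_right disjI1[OF IH1(2)]])
          have allC: "\<forall>C. subseq C (a # xs) \<and> length C = Suc k' \<longrightarrow> gv u w abot C \<le> gv u w abot S1"
          proof (intro allI impI)
            fix C assume "subseq C (a # xs) \<and> length C = Suc k'"
            then show "gv u w abot C \<le> gv u w abot S1" using opt[of C] max_absorb1[OF le] by simp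
          qed
          show ?thesis unfolding Suc r using IH1(1,3) sub allC by simp
        next
          case False
          then have le: "gv u w abot S1 \<le> gv u w abot (a # S0)" using IH1(1) cand_def by simp
          have r: "dp abot u w (a # xs) (Suc k') = (cand, a # S0)" using False eq by simp
          have sub: "subseq (a # S0) (a # xs)" by (rule subseq_Cons2[OF IH0(2)])
          have allC: "\<forall>C. subseq C (a # xs) \<and> length C = Suc k' \<longrightarrow> gv u w abot C \<le> gv u w abot (a # S0)"
          proof (intro allI impI)
            fix C assume "subseq C (a # xs) \<and> length C = Suc k'"
            then show "gv u w abot C \<le> gv u w abot (a # S0)" using opt[of C] max_absorb2[OF le] by simp
          qed
          show ?thesis unfolding Suc r using IH0(3) sub allC cand_def by simp
        qed
      qed
    qed
  qed
qed

end

theorem lemma2: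
  fixes R :: "'a set" and abot :: 'a and m :: nat
    and u w :: "'a \<Rightarrow> real" and S :: "'a list"
  assumes "finite R" and "abot \<notin> R"
    and "1 \<le> m" and "m \<le> card R"
    and "\<And>a. a \<in> insert abot R \<Longrightarrow> 0 \<le> u a \<and> u a \<le> 1"
    and "u abot = 1"
    and "best_perm R abot m u w S"
  shows "fval S u w = Max ((\<lambda>A. fval A u w) ` feasible R abot m)"
proof -
  have u01: "\<And>a. a \<in> R \<Longrightarrow> 0 \<le> u a \<and> u a \<le> 1" using assms(5) by auto
  have fg: "\<And>B. fval (B @ [abot]) u w = gv u w abot B" using fval_gv[of u abot, OF assms(6)] by blast
  define J where "J = card {a \<in> R. w a > w abot}"
  have key: "\<exists>B0. S = B0 @ [abot] \<and> distinct B0 \<and> set B0 \<subseteq> R \<and> 1 \<le> length B0 \<and> length B0 \<le> m \<and>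
     (\<forall>B. distinct B \<and> set B \<subseteq> R \<and> 1 \<le> length B \<and> length B \<le> m \<longrightarrow> gv u w abot B \<le> gv u w abot B0)"
  proof (cases "J = 0")
    case True
    then have P0: "\<forall>a\<in>R. w a \<le> w abot" using assms(1) unfolding J_def by auto
    from assms(7) True obtain a' where a': "a' \<in> R"
      "\<forall>a\<in>R. u a * w a + (1 - u a) * w abot \<le> u a' * w a' + (1 - u a') * w abot" "S = [a', abot]"
      unfolding best_perm_def J_def[symmetric] Let_def by auto
    show ?thesis
    proof (intro exI[of _ "[a']"] conjI allI impI)
      fix B assume B: "distinct B \<and> set B \<subseteq> R \<and> 1 \<le> length B \<and> length B \<le> m"
      then obtain b B' where bB: "B = b # B'" by (cases B) auto
      have bR: "b \<in> R" and B'R: "set B' \<subseteq> R" using B bB by auto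
      have "gv u w abot B' \<le> w abot" using gv_le[where R=R and u=u and w=w and abot=abot, OF u01 B'R] P0 B'R by auto
      then have "gv u w abot B \<le> u b * w b + (1 - u b) * w abot"
        using bB u01[OF bR] by (simp add: mult_left_mono)
      also have "\<dots> \<le> gv u w abot [a']" using a'(2) bR by simp
      finally show "gv u w abot B \<le> gv u w abot [a']" .
    qed (use a' assms(3) in auto)
  next
    case False
    from assms(7) False obtain L where L: "distinct L" "set L = {a \<in> R. w a > w abot}"
      "sorted_wrt (\<lambda>x y. w x \<ge> w y) L" "S = (if J \<le> m then L else snd (dp abot u w L m)) @ [abot]"
      unfolding best_perm_def J_def[symmetric] Let_def by auto
    have lenL: "length L = J" using L(1,2) distinct_card unfolding J_def by fastforce
    have LR: "set L \<subseteq> R" and Lw: "\<forall>x\<in>set L. w x > w abot" using L(2) by auto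
    have BL: "{x\<in>set B. w x > w abot} \<subseteq> set L" if "set B \<subseteq> R" for B
      using that L(2) by auto
    have filt: "length (filter (\<lambda>x. w x > w abot) B) \<le> length L" if "distinct B" "set B \<subseteq> R" for B
    proof -
      have "length (filter (\<lambda>x. w x > w abot) B) = card (set (filter (\<lambda>x. w x > w abot) B))"
        using that(1) distinct_card[of "filter (\<lambda>x. w x > w abot) B"] by simp
      also have "\<dots> \<le> card (set L)" using BL[OF that(2)] by (intro card_mono) auto
      also have "\<dots> = length L" using L(1) by (simp add: distinct_card)
      finally show ?thesis .
    qed
    show ?thesis
    proof (cases "J \<le> m")
      case True
      show ?thesis
      proof (intro exI[of _ L] conjI allI impI)
        fix B assume B: "distinct B \<and> set B \<subseteq> R \<and> 1 \<le> length B \<and> length B \<le> m"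
        obtain C where C: "subseq C L" "length C = length L" "gv u w abot B \<le> gv u w abot C"
          using main_lemma[where R=R and u=u and w=w and abot=abot, OF u01 L(1) L(3) LR Lw _ _ BL order_refl filt] B by blast
        have "C = L" using subseq_same_length[OF C(1,2)] .
        then show "gv u w abot B \<le> gv u w abot L" using C(3) by simp
      qed (use L True lenL False LR in auto)
    next
      case False
      define B0 where "B0 = snd (dp abot u w L m)"
      have mL: "m \<le> length L" using False lenL by simp
      have D: "subseq B0 L" "length B0 = m"
        "\<forall>C. subseq C L \<and> length C = m \<longrightarrow> gv u w abot C \<le> gv u w abot B0"
        using dp_correct[where R=R and u=u and w=w and abot=abot, OF u01 LR mL] unfolding B0_def by auto
      show ?thesis
      proof (intro exI[of _ B0] conjI allI impI)
        fix B assume B: "distinct B \<and> set B \<subseteq> R \<and> 1 \<le> length B \<and> length B \<le> m"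
        have f: "length (filter (\<lambda>x. w x > w abot) B) \<le> m"
          using B length_filter_le[of _ B] by (meson order_trans)
        obtain C where C: "subseq C L" "length C = m" "gv u w abot B \<le> gv u w abot C"
          using main_lemma[where R=R and u=u and w=w and abot=abot, OF u01 L(1) L(3) LR Lw _ _ BL mL f] B by blast
        then show "gv u w abot B \<le> gv u w abot B0" using D(3) by fastforce
      next
        show "distinct B0" using subseq_distinct[OF D(1) L(1)] .
        show "set B0 \<subseteq> R" using subseq_set[OF D(1)] LR by blast
      qed (use L False D B0_def assms(3) in auto)
    qed
  qed
  then obtain B0 where B0: "S = B0 @ [abot]" "distinct B0" "set B0 \<subseteq> R" "1 \<le> length B0" "length B0 \<le> m"
    "\<And>B. distinct B \<and> set B \<subseteq> R \<and> 1 \<le> length B \<and> length B \<le> m \<Longrightarrow> gv u w abot B \<le> gv u w abot B0"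
    by blast
  have Sfeas: "S \<in> feasible R abot m" unfolding feasible_def using B0 by blast
  have "feasible R abot m \<subseteq> (\<lambda>B. B @ [abot]) ` {B. set B \<subseteq> R \<and> length B \<le> m}"
    unfolding feasible_def by blast
  moreover have "finite ((\<lambda>B. B @ [abot]) ` {B. set B \<subseteq> R \<and> length B \<le> m})"
    using finite_lists_length_le[OF assms(1)] by blast
  ultimately have fin: "finite (feasible R abot m)" by (rule finite_subset)
  show ?thesis
  proof (rule Max_eqI[symmetric])
    show "finite ((\<lambda>A. fval A u w) ` feasible R abot m)" using fin by blast
    show "fval S u w \<in> (\<lambda>A. fval A u w) ` feasible R abot m" using Sfeas by blast
    fix y assume "y \<in> (\<lambda>A. fval A u w) ` feasible R abot m"
    then obtain B where "y = fval (B @ [abot]) u w" "distinct B" "set B \<subseteq> R" "1 \<le> length B" "length B \<le> m"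
      unfolding feasible_def by blast
    then show "y \<le> fval S u w" using B0 fg by simp
  qed
qed

end
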